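(* Let $D^+$ and $D^-$ be oriented link diagrams that are identical except at one crossing, which is positive in $D^+$ and negative in $D^-$. Let $D_0^+$ be the diagram obtained from $D^+$ by the $0$-smoothing of this crossing, with the orientation inherited from $D^+$ (it coincides, as an oriented diagram, with the $1$-smoothing $D_1^-$ of $D^-$ at that crossing, with orientation inherited from $D^-$). Let $D_0^-=D_1^+$ be the diagram obtained by the other smoothing of that crossing (the $1$-smoothing of $D^+$, equivalently the $0$-smoothing of $D^-$), equipped with one arbitrary fixed orientation. Put $c^+ = n_-(D_1^+)-n_-(D^+)$ and $c^- = n_-(D_0^-)-n_-(D^-)$, where $n_-$ denotes the number of negative crossings (so $c^+=c^-+1$). Then for all integers $i,j$ the sequence \[ 0 \to C^{i-2,j-3}(D_0^+) \xrightarrow{\psi_1} C^{i-2,j-4}(D^-) \xrightarrow{\phi} C^{i,j}(D^+) \xrightarrow{\psi_2} C^{i,j-1}(D_0^+) \to 0 \] is exact, where $\psi_1$ is the inclusion map of the short exact sequence $0\to C^{a,b+1}(D_1^-)\to C^{a,b}(D^-)\to C^{a-c^-,b-3c^--1}(D_0^-)\to 0$ (taken with $(a,b)=(i-2,j-4)$), $\psi_2$ is the projection map of the short exact sequence $0\to C^{i-c^+-1,j-3c^+-2}(D_1^+)\to C^{i,j}(D^+)\to C^{i,j-1}(D_0^+)\to 0$, and $\phi=\phi_2\circ\phi_1$ with $\phi_1: C^{i-2,j-4}(D^-)\to C^{(i-2)-c^-,(j-4)-3c^--1}(D_0^-)$ the projection of the first of these short exact sequences and $\phi_2: C^{i-c^+-1,j-3c^+-2}(D_0^-)\to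 C^{i,j}(D^+)$ the inclusion of the second (these two groups are equal since $c^+=c^-+1$ and $D_0^-=D_1^+$).
   Context: Khovanov chain complex over $\mathbb{Q}$: let $D$ be an oriented link diagram with $n$ crossings numbered $1,\dots,n$, $n_+$ positive and $n_-$ negative crossings. Each crossing has a $0$-smoothing and a $1$-smoothing (the standard Khovanov/Kauffman-bracket $A$- and $B$-smoothings). For $\alpha\in\{0,1\}^n$ let $r_\alpha$ be the number of $1$'s and $k_\alpha$ the number of circles of the corresponding full smoothing. Let $V$ be the graded $\mathbb{Q}$-vector space with basis $e,x$, $\deg e=1$, $\deg x=-1$; for a graded space $W$, $W\{l\}^m=W^{m-l}$. Set $V_\alpha=V^{\otimes k_\alpha}\{r_\alpha+n_+-2n_-\}$ and $C^{i,*}(D)=\bigoplus_{r_\alpha=i+n_-}V_\alpha$; an element $v$ of $V_\alpha$ (homogeneous of degree $\deg v$ in $V^{\otimes k_\alpha}$) lies in $C^{i,j}(D)$ with $i=r_\alpha-n_-$ and $j=\deg v+r_\alpha+n_+-2n_-$. The differential $d:C^{i,*}\to C^{i+1,*}$ is the sum over edges $\zeta:\alpha\to\alpha'$ of the cube (changing one $0$ to a $1$) of $(-1)^{\#\{1\text{'s to the left of the changed position}\}}d_\zeta$, where $d_\zeta$ is the identity on circles not touching the changed crossing and is $m$ (merging two circles) or $\Delta$ (splitting one circle), with $m(e\otimes e)=e$, $m(e\otimes x)=m(x\otimes e)=x$, $m(x\otimes x)=0$, $\Delta(e)=e\otimes x+x\otimes e$, $\Delta(x)=x\otimes x$. For a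 positive crossing, the states with that crossing $0$-smoothed give a quotient complex identified (with the indicated shifts) with $C(D_0^+)$ and those with it $1$-smoothed give a subcomplex identified with $C(D_1^+)$, yielding the short exact sequence $0\to C^{i-c^+-1,j-3c^+-2}(D_1^+)\to C^{i,j}(D^+)\to C^{i,j-1}(D_0^+)\to0$; for a negative crossing similarly $0\to C^{i,j+1}(D_1^-)\to C^{i,j}(D^-)\to C^{i-c^-,j-3c^--1}(D_0^-)\to0$, where the first map includes the $1$-smoothed states and the second projects to the $0$-smoothed states. *)

theory Defs
  imports Complex_Main
begin

text \<open>
A diagram has vertices 0,...,nv-1; each vertex has four positions 0,1,2,3 in
counterclockwise order.  The arcs of the diagram form a fixed-point free
involution on the set of positions; in addition there are loops
crossing-free circle components.  A vertex is either a crossing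
(Cross u: if u then the under strand joins positions 0 and 2, the over strand
joins 1 and 3; otherwise the under strand joins 1 and 3, the over strand 0 and 2)
or an already resolved vertex (Smoothed b: the two strands join positions
0-1 and 2-3 if b = False, and 0-3 and 1-2 if b = True).
An orientation is a map ori on positions: ori h means the strand enters the vertex at h.
\<close>

datatype vkind = Cross bool | Smoothed bool

record diag =
  nv    :: nat
  arc   :: "nat \<times> nat \<Rightarrow> nat \<times> nat"
  loops :: nat
  kind  :: "nat \<Rightarrow> vkind"

type_synonym orientation = "nat \<times> nat \<Rightarrow> bool"

definition pos :: "diag \<Rightarrow> (nat \<times> nat) set" where
  "pos D = {(v, p). v < nv D \<and> p < 4}"

definition is_cross :: "vkind \<Rightarrow> bool" where
  "is_cross k = (case k of Cross _ \<Rightarrow> True | Smoothed _ \<Rightarrow> False)"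

definition crossings :: "diag \<Rightarrow> nat set" where
  "crossings D = {v. v < nv D \<and> is_cross (kind D v)}"

definition partner :: "bool \<Rightarrow> nat \<Rightarrow> nat" where
  "partner b p = (if b then 3 - p else (if even p then p + 1 else p - 1))"

text \<open>pattern of the s-smoothing (s = False: 0-smoothing = Kauffman A-smoothing,
  s = True: 1-smoothing = B-smoothing) of a vertex of kind k\<close>
definition smooth_pattern :: "vkind \<Rightarrow> bool \<Rightarrow> bool" where
  "smooth_pattern k s = (case k of Cross u \<Rightarrow> (if u then s else \<not> s) | Smoothed b \<Rightarrow> b)"

definition rot :: "nat \<times> nat \<Rightarrow> nat \<times> nat" where
  "rot h = (fst h, (snd h + 1) mod 4)"

definition faces :: "diag \<Rightarrow> (nat \<times> nat) set set" where
  "faces D = {{((rot \<circ> arc D) ^^ k) h | k. True} | h. h \<in> pos D}"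

definition vadj :: "diag \<Rightarrow> (nat \<times> nat) set" where
  "vadj D = {(v, fst (arc D (v, p))) | v p. (v, p) \<in> pos D}"

definition components :: "diag \<Rightarrow> nat set set" where
  "components D = {(vadj D)\<^sup>* `` {v} | v. v < nv D}"

text \<open>the underlying 4-valent graph with its rotation system has genus 0
  (Euler: V - E + F = 2 per connected component, with E = 2V)\<close>
definition planar :: "diag \<Rightarrow> bool" where
  "planar D \<longleftrightarrow> card (faces D) = nv D + 2 * card (components D)"

definition arcs_ok :: "diag \<Rightarrow> bool" where
  "arcs_ok D \<longleftrightarrow> (\<forall>h \<in> pos D. arc D h \<in> pos D \<and> arc D h \<noteq> h \<and> arc D (arc D h) = h)"

definition link_diagram :: "diag \<Rightarrow> bool" where
  "link_diagram D \<longleftrightarrow> arcs_ok D \<and> planar D \<and> (\<forall>v < nv D. is_cross (kind D v))"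

definition is_orientation :: "diag \<Rightarrow> orientation \<Rightarrow> bool" where
  "is_orientation D ori \<longleftrightarrow>
     (\<forall>h \<in> pos D. ori (arc D h) \<noteq> ori h) \<and>
     (\<forall>v < nv D. case kind D v of
        Cross _ \<Rightarrow> (\<forall>p < 4. ori (v, p) \<noteq> ori (v, (p + 2) mod 4))
      | Smoothed b \<Rightarrow> (\<forall>p < 4. ori (v, p) \<noteq> ori (v, partner b p)))"

definition positive :: "diag \<Rightarrow> orientation \<Rightarrow> nat \<Rightarrow> bool" where
  "positive D ori v = (case kind D v of
      Cross u \<Rightarrow> (if u then ori (v, 0) = ori (v, 3) else ori (v, 1) = ori (v, 0))
    | Smoothed _ \<Rightarrow> False)"

definition nminus :: "diag \<Rightarrow> orientation \<Rightarrow> nat" where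
  "nminus D ori = card {v \<in> crossings D. \<not> positive D ori v}"

definition nplus :: "diag \<Rightarrow> orientation \<Rightarrow> nat" where
  "nplus D ori = card {v \<in> crossings D. positive D ori v}"

definition switch :: "diag \<Rightarrow> nat \<Rightarrow> diag" where
  "switch D c = D\<lparr>kind := (kind D)(c := (case kind D c of Cross u \<Rightarrow> Cross (\<not> u) | k \<Rightarrow> k))\<rparr>"

definition smooth :: "diag \<Rightarrow> nat \<Rightarrow> bool \<Rightarrow> diag" where
  "smooth D c s = D\<lparr>kind := (kind D)(c := Smoothed (smooth_pattern (kind D c) s))\<rparr>"

type_synonym state = "nat \<Rightarrow> bool"  \<comment> \<open>True = 1-smoothing\<close>
type_synonym circle = "(nat \<times> nat) set + nat"
type_synonym gen = "state \<times> (circle \<Rightarrow> bool)"  \<comment> \<open>label True = x, False = e\<close>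

definition resolved :: "diag \<Rightarrow> state \<Rightarrow> nat \<Rightarrow> bool" where
  "resolved D s v = smooth_pattern (kind D v) (s v)"

definition cstep :: "diag \<Rightarrow> state \<Rightarrow> ((nat \<times> nat) \<times> (nat \<times> nat)) set" where
  "cstep D s = {(h, arc D h) | h. h \<in> pos D} \<union>
               {((v, p), (v, partner (resolved D s v) p)) | v p. (v, p) \<in> pos D}"

definition circles :: "diag \<Rightarrow> state \<Rightarrow> circle set" where
  "circles D s = (\<lambda>h. Inl ((cstep D s)\<^sup>* `` {h})) ` pos D \<union> Inr ` {..<loops D}"

definition valid_gen :: "diag \<Rightarrow> gen \<Rightarrow> bool" where
  "valid_gen D g \<longleftrightarrow> (\<forall>v. fst g v \<longrightarrow> v \<in> crossings D) \<and> (\<forall>C. snd g C \<longrightarrow> C \<in> circles D (fst g))"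

definition rdeg :: "gen \<Rightarrow> nat" where
  "rdeg g = card {v. fst g v}"

text \<open>degree in V^{\<otimes>k}: (#e) - (#x)\<close>
definition vdeg :: "diag \<Rightarrow> gen \<Rightarrow> int" where
  "vdeg D g = int (card (circles D (fst g))) - 2 * int (card {C. snd g C})"

definition hdeg :: "diag \<Rightarrow> orientation \<Rightarrow> gen \<Rightarrow> int" where
  "hdeg D ori g = int (rdeg g) - int (nminus D ori)"

definition qdeg :: "diag \<Rightarrow> orientation \<Rightarrow> gen \<Rightarrow> int" where
  "qdeg D ori g = vdeg D g + int (rdeg g) + int (nplus D ori) - 2 * int (nminus D ori)"

text \<open>C^{i,j}(D) as the Q-vector space of rational combinations of the generators
  of bidegree (i,j)\<close>
definition KhC :: "diag \<Rightarrow> orientation \<Rightarrow> int \<Rightarrow> int \<Rightarrow> (gen \<Rightarrow> rat) set" where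
  "KhC D ori i j = {f. \<forall>g. f g \<noteq> 0 \<longrightarrow> valid_gen D g \<and> hdeg D ori g = i \<and> qdeg D ori g = j}"

text \<open>inclusion of C(D_1) (states with crossing c 1-smoothed) into C(D), with the sign
  making it a chain map for the given crossing numbering\<close>
definition incl :: "nat \<Rightarrow> (gen \<Rightarrow> rat) \<Rightarrow> (gen \<Rightarrow> rat)" where
  "incl c f = (\<lambda>(s, l). if s c then (-1) ^ card {v. c < v \<and> s v} * f (s(c := False), l) else 0)"

definition proj :: "nat \<Rightarrow> (gen \<Rightarrow> rat) \<Rightarrow> (gen \<Rightarrow> rat)" where
  "proj c f = (\<lambda>(s, l). if s c then 0 else f (s, l))"

definition exact4 :: "(gen \<Rightarrow> rat) set \<Rightarrow> (gen \<Rightarrow> rat) set \<Rightarrow> (gen \<Rightarrow> rat) set \<Rightarrow> (gen \<Rightarrow> rat) set \<Rightarrow>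
    ((gen \<Rightarrow> rat) \<Rightarrow> (gen \<Rightarrow> rat)) \<Rightarrow> ((gen \<Rightarrow> rat) \<Rightarrow> (gen \<Rightarrow> rat)) \<Rightarrow> ((gen \<Rightarrow> rat) \<Rightarrow> (gen \<Rightarrow> rat)) \<Rightarrow> bool" where
  "exact4 A B C E f g h \<longleftrightarrow>
     f ` A \<subseteq> B \<and> g ` B \<subseteq> C \<and> h ` C \<subseteq> E \<and>
     {a \<in> A. f a = (\<lambda>_. 0)} = {\<lambda>_. 0} \<and>
     {b \<in> B. g b = (\<lambda>_. 0)} = f ` A \<and>
     {x \<in> C. h x = (\<lambda>_. 0)} = g ` B \<and>
     h ` C = E"

end

theory Submission
  imports Defs
begin


lemma kind_switch: "kind (switch D c) v = (if v = c then (case kind D c of Cross u \<Rightarrow> Cross (\<not> u) | k \<Rightarrow> k) else kind D v)"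
  by (simp add: switch_def)
lemma kind_smooth: "kind (smooth D c b) v = (if v = c then Smoothed (smooth_pattern (kind D c) b) else kind D v)"
  by (simp add: smooth_def)
lemma other_switch[simp]: "nv (switch D c) = nv D" "arc (switch D c) = arc D" "loops (switch D c) = loops D"
  by (simp_all add: switch_def)
lemma other_smooth[simp]: "nv (smooth D c b) = nv D" "arc (smooth D c b) = arc D" "loops (smooth D c b) = loops D"
  by (simp_all add: smooth_def)

lemma crossings_switch: "crossings (switch D c) = crossings D"
  by (auto simp: crossings_def kind_switch is_cross_def split: vkind.splits)
lemma crossings_smooth: "crossings (smooth D c b) = crossings D - {c}"
  by (cases "kind D c") (auto simp: crossings_def kind_smooth is_cross_def split: vkind.splits)
lemma finite_crossings: "finite (crossings D)"
  by (rule finite_subset[of _ "{..<nv D}"]) (auto simp: crossings_def)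

lemma nplus_nminus: "nplus D ori + nminus D ori = card (crossings D)"
proof -
  have "crossings D = {v \<in> crossings D. positive D ori v} \<union> {v \<in> crossings D. \<not> positive D ori v}" by auto
  moreover have "card ({v \<in> crossings D. positive D ori v} \<union> {v \<in> crossings D. \<not> positive D ori v})
     = card {v \<in> crossings D. positive D ori v} + card {v \<in> crossings D. \<not> positive D ori v}"
    by (rule card_Un_disjoint) (use finite_crossings[of D] in auto)
  ultimately show ?thesis unfolding nplus_def nminus_def by simp
qed

lemma pos_switch: "v \<noteq> c \<Longrightarrow> positive (switch D c) ori v = positive D ori v"
  by (simp add: positive_def kind_switch)
lemma pos_smooth: "v \<noteq> c \<Longrightarrow> positive (smooth D c b) ori v = positive D ori v"
  by (simp add: positive_def kind_smooth)

lemma pos_switch_c: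
  assumes "is_orientation D ori" "c \<in> crossings D"
  shows "positive (switch D c) ori c = (\<not> positive D ori c)"
proof -
  have c: "c < nv D" and ic: "is_cross (kind D c)" using assms(2) by (simp_all add: crossings_def)
  obtain u where u: "kind D c = Cross u" using ic by (cases "kind D c") (auto simp: is_cross_def)
  have "case kind D c of Cross _ \<Rightarrow> (\<forall>p < 4. ori (c, p) \<noteq> ori (c, (p + 2) mod 4))
      | Smoothed b \<Rightarrow> (\<forall>p < 4. ori (c, p) \<noteq> ori (c, partner b p))"
    using conjunct2[OF assms(1)[unfolded is_orientation_def], rule_format, OF c] .
  then have h: "\<forall>p<4. ori (c, p) \<noteq> ori (c, (p + 2) mod 4)" unfolding u by (simp only: vkind.case)
  have "ori (c, 0) \<noteq> ori (c, 2)" using h[rule_format, of 0] by (simp only: zero_less_numeral add_0 mod_less numeral_less_iff semiring_norm simp_thms)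
  moreover have "ori (c, 1) \<noteq> ori (c, 3)" using h[rule_format, of 1] by simp
  ultimately have a: "ori (c,2) = (\<not> ori (c,0))" "ori (c,3) = (\<not> ori (c,1))" by auto
  show ?thesis using u a unfolding positive_def kind_switch by auto
qed

lemma circles_eq:
  assumes "nv X = nv Y" "arc X = arc Y" "loops X = loops Y" "\<And>v. resolved X s v = resolved Y t v"
  shows "circles X s = circles Y t"
proof -
  have "pos X = pos Y" using assms by (simp add: pos_def)
  moreover have "cstep X s = cstep Y t" unfolding cstep_def using assms(2,4) \<open>pos X = pos Y\<close> by simp
  ultimately show ?thesis unfolding circles_def using assms(3) by simp
qed

lemma resolved_smooth: "resolved (smooth X c b) t v = (if v = c then smooth_pattern (kind X c) b else resolved X t v)"
  by (simp add: resolved_def kind_smooth smooth_pattern_def)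
lemma resolved_switch: "kind X c = Cross u \<Longrightarrow> resolved (switch X c) t v = (if v = c then smooth_pattern (kind X c) (\<not> t c) else resolved X t v)"
  by (simp add: resolved_def kind_switch smooth_pattern_def)
lemma resolved_upd: "v \<noteq> c \<Longrightarrow> resolved X (s(c := b)) v = resolved X s v"
  by (simp add: resolved_def)

lemma smooth_switch: "kind D c = Cross u \<Longrightarrow> smooth (switch D c) c False = smooth D c True"
  by (simp add: smooth_def switch_def smooth_pattern_def)

lemma nminus_switch:
  assumes "is_orientation D ori" "c \<in> crossings D" "positive D ori c"
  shows "nminus (switch D c) ori = nminus D ori + 1"
proof -
  have "{v \<in> crossings (switch D c). \<not> positive (switch D c) ori v} = insert c {v \<in> crossings D. \<not> positive D ori v}"
    using pos_switch_c[OF assms(1,2)] assms(2,3) pos_switch[of _ c D ori] by (auto simp: crossings_switch) (metis)+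
  moreover have "c \<notin> {v \<in> crossings D. \<not> positive D ori v}" using assms(3) by auto
  moreover have "finite {v \<in> crossings D. \<not> positive D ori v}" using finite_crossings by auto
  ultimately show ?thesis unfolding nminus_def by simp
qed

lemma nminus_smooth:
  assumes "positive D ori c"
  shows "nminus (smooth D c b) ori = nminus D ori"
proof -
  have "{v \<in> crossings (smooth D c b). \<not> positive (smooth D c b) ori v} = {v \<in> crossings D. \<not> positive D ori v}"
    using assms pos_smooth[of _ c D b ori] by (auto simp: crossings_smooth) (metis)+
  then show ?thesis unfolding nminus_def by simp
qed

lemma card_cross_smooth: "c \<in> crossings D \<Longrightarrow> card (crossings (smooth D c b)) = card (crossings D) - 1"
  by (simp add: crossings_smooth finite_crossings)




lemma KhC_iff: "f \<in> KhC X ori i j \<longleftrightarrow> (\<forall>s l. f (s, l) \<noteq> 0 \<longrightarrow> valid_gen X (s, l) \<and> hdeg X ori (s, l) = i \<and> qdeg X ori (s, l) = j)"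
  unfolding KhC_def by auto

definition sg :: "nat \<Rightarrow> state \<Rightarrow> rat" where "sg c s = (-1) ^ card {v. c < v \<and> s v}"

lemma incl_apply: "incl c f (s, l) = (if s c then sg c s * f (s(c := False), l) else 0)"
  by (simp add: incl_def sg_def)
lemma proj_apply: "proj c f (s, l) = (if s c then 0 else f (s, l))"
  by (simp add: proj_def)
lemma sg_upd[simp]: "sg c (s(c := b)) = sg c s"
proof -
  have "{v. c < v \<and> (s(c := b)) v} = {v. c < v \<and> s v}" by auto
  then show ?thesis by (simp add: sg_def)
qed
lemma sg_sq: "sg c s * sg c s = 1"
  by (simp add: sg_def power_add[symmetric] flip: power_add)

lemma valid_fin: "valid_gen X (s, l) \<Longrightarrow> finite {v. s v}"
  unfolding valid_gen_def by (auto intro: finite_subset[OF _ finite_crossings])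

lemma rdeg_upd: "s c \<Longrightarrow> finite {v. s v} \<Longrightarrow> int (rdeg (s, l)) = int (rdeg (s(c := False), l')) + 1"
proof -
  assume a: "s c" "finite {v. s v}"
  have "{v. s v} = insert c {v. (s(c := False)) v}" using a(1) by auto
  moreover have "finite {v. (s(c := False)) v}" using a(2) by (auto intro: finite_subset)
  ultimately show ?thesis by (simp add: rdeg_def)
qed

lemma int_nplus: "int (nplus X ori) = int (card (crossings X)) - int (nminus X ori)"
  using nplus_nminus[of X ori] by linarith


definition bk :: "nat \<Rightarrow> (gen \<Rightarrow> rat) \<Rightarrow> (gen \<Rightarrow> rat)" where
  "bk c x = (\<lambda>(s, l). if s c then 0 else sg c s * x (s(c := True), l))"

lemma bk_apply: "bk c x (s, l) = (if s c then 0 else sg c s * x (s(c := True), l))"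
  by (simp add: bk_def)

lemma zero_iff: "f = (\<lambda>_. 0) \<longleftrightarrow> (\<forall>s l. f (s, l) = 0)"
  by (simp add: fun_eq_iff split_paired_All)

lemma upd_tf: "\<not> s c \<Longrightarrow> s(c := True, c := False) = s"
  by (auto simp: fun_eq_iff)
lemma upd_ft: "s c \<Longrightarrow> s(c := False, c := True) = s"
  by (auto simp: fun_eq_iff)

lemma incl_bk: "(\<forall>s l. x (s, l) \<noteq> 0 \<longrightarrow> s c) \<Longrightarrow> incl c (bk c x) = x"
proof (rule ext, clarify)
  fix s l assume a: "\<forall>s l. x (s, l) \<noteq> 0 \<longrightarrow> s c"
  show "incl c (bk c x) (s, l) = x (s, l)"
  proof (cases "s c")
    case True
    then show ?thesis by (simp add: incl_apply bk_apply fun_upd_idem mult.assoc[symmetric] sg_sq)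
  next
    case False
    then show ?thesis using a by (auto simp: incl_apply)
  qed
qed

lemma incl_inj: "(\<forall>s l. f (s, l) \<noteq> 0 \<longrightarrow> \<not> s c) \<Longrightarrow> incl c f = (\<lambda>_. 0) \<Longrightarrow> f = (\<lambda>_. 0)"
proof -
  assume a: "\<forall>s l. f (s, l) \<noteq> 0 \<longrightarrow> \<not> s c" and z: "incl c f = (\<lambda>_. 0)"
  show ?thesis unfolding zero_iff
  proof (intro allI)
    fix s l
    show "f (s, l) = 0"
    proof (rule ccontr)
      assume nz: "f (s, l) \<noteq> 0"
      then have "\<not> s c" using a by blast
      then have "incl c f (s(c := True), l) = sg c s * f (s, l)" by (simp add: incl_apply fun_upd_idem)
      moreover have "sg c s \<noteq> 0" by (simp add: sg_def)
      ultimately have "incl c f (s(c := True), l) \<noteq> 0" using nz by simp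
      then show False using z by simp
    qed
  qed
qed

lemma proj_incl: "proj c (incl c f) = (\<lambda>_. 0)"
  by (simp add: zero_iff proj_apply incl_apply)

lemma incl_zero: "incl c (\<lambda>_. 0) = (\<lambda>_. 0)"
  by (simp add: zero_iff incl_apply)

context
  fixes D :: diag and c :: nat and ori oz :: orientation and u :: bool
  assumes cr: "c \<in> crossings D" and u: "kind D c = Cross u" and ori: "is_orientation D ori"
    and posc: "positive D ori c"
begin

lemma valid_notc: "valid_gen (smooth D c b) (s, l) \<Longrightarrow> \<not> s c"
  unfolding valid_gen_def crossings_smooth by auto

lemma res_a: "\<not> s c \<Longrightarrow> resolved D s v = resolved (smooth D c False) s v"
  by (cases "v = c") (auto simp: resolved_smooth resolved_def[of D s c])
lemma res_b: "\<not> s c \<Longrightarrow> resolved (switch D c) s v = resolved (smooth D c True) s v"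
  by (cases "v = c") (auto simp: resolved_smooth resolved_switch[OF u])
lemma res_c: "s c \<Longrightarrow> resolved D s v = resolved (smooth D c True) (s(c := False)) v"
  by (cases "v = c") (auto simp: resolved_smooth resolved_upd resolved_def[of D s c])
lemma res_d: "s c \<Longrightarrow> resolved (switch D c) s v = resolved (smooth D c False) (s(c := False)) v"
  by (cases "v = c") (auto simp: resolved_smooth resolved_switch[OF u] resolved_upd)

lemma circ_a: "\<not> s c \<Longrightarrow> circles D s = circles (smooth D c False) s"
  by (rule circles_eq) (simp_all add: res_a)
lemma circ_b: "\<not> s c \<Longrightarrow> circles (switch D c) s = circles (smooth D c True) s"
  by (rule circles_eq) (simp_all add: res_b)
lemma circ_c: "s c \<Longrightarrow> circles D s = circles (smooth D c True) (s(c := False))"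
  by (rule circles_eq) (simp_all add: res_c)
lemma circ_d: "s c \<Longrightarrow> circles (switch D c) s = circles (smooth D c False) (s(c := False))"
  by (rule circles_eq) (simp_all add: res_d)

lemma val_a: "\<not> s c \<Longrightarrow> valid_gen D (s, l) = valid_gen (smooth D c False) (s, l)"
  unfolding valid_gen_def crossings_smooth using circ_a[of s] by auto
lemma val_b: "\<not> s c \<Longrightarrow> valid_gen (switch D c) (s, l) = valid_gen (smooth D c True) (s, l)"
  unfolding valid_gen_def crossings_smooth crossings_switch using circ_b[of s] by auto
lemma val_c: "s c \<Longrightarrow> valid_gen D (s, l) = valid_gen (smooth D c True) (s(c := False), l)"
  unfolding valid_gen_def crossings_smooth using circ_c[of s] cr by auto
lemma val_d: "s c \<Longrightarrow> valid_gen (switch D c) (s, l) = valid_gen (smooth D c False) (s(c := False), l)"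
  unfolding valid_gen_def crossings_smooth crossings_switch using circ_d[of s] cr by auto

lemma nm_m: "int (nminus (switch D c) ori) = int (nminus D ori) + 1"
  using nminus_switch[OF ori cr posc] by simp
lemma nm_0: "int (nminus (smooth D c b) ori) = int (nminus D ori)"
  using nminus_smooth[OF posc] by simp
lemma cc_s: "int (card (crossings (smooth D c b))) = int (card (crossings D)) - 1"
proof -
  have "card (crossings D) \<ge> 1" using cr finite_crossings[of D]
    by (metis One_nat_def Suc_leI card_gt_0_iff empty_iff)
  then show ?thesis using card_cross_smooth[OF cr, of b] by simp
qed

lemma deg_a: "\<not> s c \<Longrightarrow> hdeg (smooth D c False) ori (s, l) = hdeg D ori (s, l) \<and>
   qdeg (smooth D c False) ori (s, l) = qdeg D ori (s, l) - 1"
  unfolding hdeg_def qdeg_def vdeg_def int_nplus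
  using circ_a[of s] nm_0[of False] cc_s[of False] by simp

lemma deg_b: "\<not> s c \<Longrightarrow> hdeg (smooth D c True) oz (s, l) = hdeg (switch D c) ori (s, l) + int (nminus D ori) + 1 - int (nminus (smooth D c True) oz) \<and>
   qdeg (smooth D c True) oz (s, l) = qdeg (switch D c) ori (s, l) + 3 * int (nminus D ori) + 2 - 3 * int (nminus (smooth D c True) oz)"
  unfolding hdeg_def qdeg_def vdeg_def int_nplus
  using circ_b[of s] nm_m cc_s[of True] by (simp add: crossings_switch)

lemma deg_c: "s c \<Longrightarrow> finite {v. s v} \<Longrightarrow> hdeg D ori (s, l) = hdeg (smooth D c True) oz (s(c := False), l) + 1 + int (nminus (smooth D c True) oz) - int (nminus D ori) \<and>
   qdeg D ori (s, l) = qdeg (smooth D c True) oz (s(c := False), l) + 2 + 3 * int (nminus (smooth D c True) oz) - 3 * int (nminus D ori)"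
  unfolding hdeg_def qdeg_def vdeg_def int_nplus
  using circ_c[of s] cc_s[of True] rdeg_upd[of s c l l] by simp

lemma deg_d: "s c \<Longrightarrow> finite {v. s v} \<Longrightarrow> hdeg (switch D c) ori (s, l) = hdeg (smooth D c False) ori (s(c := False), l) \<and>
   qdeg (switch D c) ori (s, l) = qdeg (smooth D c False) ori (s(c := False), l) - 1"
  unfolding hdeg_def qdeg_def vdeg_def int_nplus
  using circ_d[of s] nm_m nm_0[of False] cc_s[of False] rdeg_upd[of s c l l] by (simp add: crossings_switch)


lemma P1: "f \<in> KhC (switch D c) ori a b \<Longrightarrow> a' = a + int (nminus D ori) + 1 - int (nminus (smooth D c True) oz)
  \<Longrightarrow> b' = b + 3 * int (nminus D ori) + 2 - 3 * int (nminus (smooth D c True) oz)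
  \<Longrightarrow> proj c f \<in> KhC (smooth D c True) oz a' b'"
  unfolding KhC_iff
proof (intro allI impI)
  fix s l
  assume f: "\<forall>s l. f (s, l) \<noteq> 0 \<longrightarrow> valid_gen (switch D c) (s, l) \<and> hdeg (switch D c) ori (s, l) = a \<and> qdeg (switch D c) ori (s, l) = b"
    and ab: "a' = a + int (nminus D ori) + 1 - int (nminus (smooth D c True) oz)"
      "b' = b + 3 * int (nminus D ori) + 2 - 3 * int (nminus (smooth D c True) oz)"
    and nz: "proj c f (s, l) \<noteq> 0"
  then have sc: "\<not> s c" and f1: "f (s, l) \<noteq> 0" by (auto simp: proj_apply split: if_splits)
  then have v: "valid_gen (switch D c) (s, l)" using f by blast
  then have vD: "valid_gen (smooth D c True) (s, l)" using val_b[of s l, OF sc] by simp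
  show "valid_gen (smooth D c True) (s, l) \<and> hdeg (smooth D c True) oz (s, l) = a' \<and> qdeg (smooth D c True) oz (s, l) = b'"
    using vD deg_b[of s l, OF sc] f f1 ab by auto
qed

lemma I1: "f \<in> KhC (smooth D c True) oz a b \<Longrightarrow> a' = a + 1 + int (nminus (smooth D c True) oz) - int (nminus D ori)
  \<Longrightarrow> b' = b + 2 + 3 * int (nminus (smooth D c True) oz) - 3 * int (nminus D ori)
  \<Longrightarrow> incl c f \<in> KhC D ori a' b'"
  unfolding KhC_iff
proof (intro allI impI)
  fix s l
  assume f: "\<forall>s l. f (s, l) \<noteq> 0 \<longrightarrow> valid_gen (smooth D c True) (s, l) \<and> hdeg (smooth D c True) oz (s, l) = a \<and> qdeg (smooth D c True) oz (s, l) = b"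
    and ab: "a' = a + 1 + int (nminus (smooth D c True) oz) - int (nminus D ori)"
       "b' = b + 2 + 3 * int (nminus (smooth D c True) oz) - 3 * int (nminus D ori)"
    and nz: "incl c f (s, l) \<noteq> 0"
  then have sc: "s c" and f1: "f (s(c := False), l) \<noteq> 0" by (auto simp: incl_apply split: if_splits)
  then have v: "valid_gen (smooth D c True) (s(c := False), l)" using f by blast
  then have vD: "valid_gen D (s, l)" using val_c[of s l, OF sc] by simp
  have "finite {v. s v}" using valid_fin[OF vD] .
  then show "valid_gen D (s, l) \<and> hdeg D ori (s, l) = a' \<and> qdeg D ori (s, l) = b'"
    using vD deg_c[of s, OF sc, of l] f f1 ab by auto
qed

lemma I0: "f \<in> KhC (smooth D c False) ori a b \<Longrightarrow> b' = b - 1 \<Longrightarrow> incl c f \<in> KhC (switch D c) ori a b'"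
  unfolding KhC_iff
proof (intro allI impI)
  fix s l
  assume f: "\<forall>s l. f (s, l) \<noteq> 0 \<longrightarrow> valid_gen (smooth D c False) (s, l) \<and> hdeg (smooth D c False) ori (s, l) = a \<and> qdeg (smooth D c False) ori (s, l) = b"
    and ab: "b' = b - 1"
    and nz: "incl c f (s, l) \<noteq> 0"
  then have sc: "s c" and f1: "f (s(c := False), l) \<noteq> 0" by (auto simp: incl_apply split: if_splits)
  then have v: "valid_gen (smooth D c False) (s(c := False), l)" using f by blast
  then have vD: "valid_gen (switch D c) (s, l)" using val_d[of s l, OF sc] by simp
  have "finite {v. s v}" using valid_fin[OF vD] .
  then show "valid_gen (switch D c) (s, l) \<and> hdeg (switch D c) ori (s, l) = a \<and> qdeg (switch D c) ori (s, l) = b'"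
    using vD deg_d[of s, OF sc, of l] f f1 ab by auto
qed

lemma P0: "f \<in> KhC D ori a b \<Longrightarrow> b' = b - 1 \<Longrightarrow> proj c f \<in> KhC (smooth D c False) ori a b'"
  unfolding KhC_iff
proof (intro allI impI)
  fix s l
  assume f: "\<forall>s l. f (s, l) \<noteq> 0 \<longrightarrow> valid_gen D (s, l) \<and> hdeg D ori (s, l) = a \<and> qdeg D ori (s, l) = b"
    and ab: "b' = b - 1"
    and nz: "proj c f (s, l) \<noteq> 0"
  then have sc: "\<not> s c" and f1: "f (s, l) \<noteq> 0" by (auto simp: proj_apply split: if_splits)
  then have v: "valid_gen D (s, l)" using f by blast
  then have vD: "valid_gen (smooth D c False) (s, l)" using val_a[of s l, OF sc] by simp
  show "valid_gen (smooth D c False) (s, l) \<and> hdeg (smooth D c False) ori (s, l) = a \<and> qdeg (smooth D c False) ori (s, l) = b'"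
    using vD deg_a[of s l, OF sc] f f1 ab by auto
qed

lemma bk_Dm: "x \<in> KhC (switch D c) ori a b \<Longrightarrow> \<forall>s l. x (s, l) \<noteq> 0 \<longrightarrow> s c \<Longrightarrow> b' = b + 1
   \<Longrightarrow> bk c x \<in> KhC (smooth D c False) ori a b'"
  unfolding KhC_iff
proof (intro allI impI)
  fix s l
  assume x: "\<forall>s l. x (s, l) \<noteq> 0 \<longrightarrow> valid_gen (switch D c) (s, l) \<and> hdeg (switch D c) ori (s, l) = a \<and> qdeg (switch D c) ori (s, l) = b"
    and ab: "b' = b + 1"
    and nz: "bk c x (s, l) \<noteq> 0"
  then have sc: "\<not> s c" and x1: "x (s(c := True), l) \<noteq> 0" by (auto simp: bk_apply split: if_splits)
  have sc': "(s(c := True)) c" by simp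
  have v: "valid_gen (switch D c) (s(c := True), l)" using x x1 by blast
  then have vD: "valid_gen (smooth D c False) (s, l)" using val_d[of "s(c := True)" l, OF sc'] upd_tf[of s c, OF sc] by simp
  have "finite {v. (s(c := True)) v}" using valid_fin[OF v] .
  then show "valid_gen (smooth D c False) (s, l) \<and> hdeg (smooth D c False) ori (s, l) = a \<and> qdeg (smooth D c False) ori (s, l) = b'"
    using vD deg_d[of "s(c := True)", OF sc', of l] x x1 ab upd_tf[of s c, OF sc] by auto
qed

lemma bk_D: "x \<in> KhC D ori a b \<Longrightarrow> \<forall>s l. x (s, l) \<noteq> 0 \<longrightarrow> s c
   \<Longrightarrow> a = a' + 1 + int (nminus (smooth D c True) oz) - int (nminus D ori)
   \<Longrightarrow> b = b' + 2 + 3 * int (nminus (smooth D c True) oz) - 3 * int (nminus D ori)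
   \<Longrightarrow> bk c x \<in> KhC (smooth D c True) oz a' b'"
  unfolding KhC_iff
proof (intro allI impI)
  fix s l
  assume x: "\<forall>s l. x (s, l) \<noteq> 0 \<longrightarrow> valid_gen D (s, l) \<and> hdeg D ori (s, l) = a \<and> qdeg D ori (s, l) = b"
    and ab: "a = a' + 1 + int (nminus (smooth D c True) oz) - int (nminus D ori)"
      "b = b' + 2 + 3 * int (nminus (smooth D c True) oz) - 3 * int (nminus D ori)"
    and nz: "bk c x (s, l) \<noteq> 0"
  then have sc: "\<not> s c" and x1: "x (s(c := True), l) \<noteq> 0" by (auto simp: bk_apply split: if_splits)
  have sc': "(s(c := True)) c" by simp
  have v: "valid_gen D (s(c := True), l)" using x x1 by blast
  then have vD: "valid_gen (smooth D c True) (s, l)" using val_c[of "s(c := True)" l, OF sc'] upd_tf[of s c, OF sc] by simp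
  have "finite {v. (s(c := True)) v}" using valid_fin[OF v] .
  then show "valid_gen (smooth D c True) (s, l) \<and> hdeg (smooth D c True) oz (s, l) = a' \<and> qdeg (smooth D c True) oz (s, l) = b'"
    using vD deg_c[of "s(c := True)", OF sc', of l] x x1 ab upd_tf[of s c, OF sc] by auto
qed

lemma D1_Dm: "f \<in> KhC (smooth D c True) oz a b
  \<Longrightarrow> a = a' + int (nminus D ori) + 1 - int (nminus (smooth D c True) oz)
  \<Longrightarrow> b = b' + 3 * int (nminus D ori) + 2 - 3 * int (nminus (smooth D c True) oz)
  \<Longrightarrow> f \<in> KhC (switch D c) ori a' b'"
  unfolding KhC_iff
proof (intro allI impI)
  fix s l
  assume f: "\<forall>s l. f (s, l) \<noteq> 0 \<longrightarrow> valid_gen (smooth D c True) (s, l) \<and> hdeg (smooth D c True) oz (s, l) = a \<and> qdeg (smooth D c True) oz (s, l) = b"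
    and ab: "a = a' + int (nminus D ori) + 1 - int (nminus (smooth D c True) oz)"
      "b = b' + 3 * int (nminus D ori) + 2 - 3 * int (nminus (smooth D c True) oz)"
    and f1: "f (s, l) \<noteq> 0"
  then have v: "valid_gen (smooth D c True) (s, l)" by blast
  then have sc: "\<not> s c" by (rule valid_notc)
  have vD: "valid_gen (switch D c) (s, l)" using v val_b[of s l, OF sc] by simp
  show "valid_gen (switch D c) (s, l) \<and> hdeg (switch D c) ori (s, l) = a' \<and> qdeg (switch D c) ori (s, l) = b'"
    using vD deg_b[of s l, OF sc] f f1 ab by auto
qed

lemma D0_D: "f \<in> KhC (smooth D c False) ori a b \<Longrightarrow> b' = b + 1 \<Longrightarrow> f \<in> KhC D ori a b'"
  unfolding KhC_iff
proof (intro allI impI)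
  fix s l
  assume f: "\<forall>s l. f (s, l) \<noteq> 0 \<longrightarrow> valid_gen (smooth D c False) (s, l) \<and> hdeg (smooth D c False) ori (s, l) = a \<and> qdeg (smooth D c False) ori (s, l) = b"
    and ab: "b' = b + 1"
    and f1: "f (s, l) \<noteq> 0"
  then have v: "valid_gen (smooth D c False) (s, l)" by blast
  then have sc: "\<not> s c" by (rule valid_notc)
  have vD: "valid_gen D (s, l)" using v val_a[of s l, OF sc] by simp
  show "valid_gen D (s, l) \<and> hdeg D ori (s, l) = a \<and> qdeg D ori (s, l) = b'"
    using vD deg_a[of s l, OF sc] f f1 ab by auto
qed

lemma proj_id: "f \<in> KhC (smooth D c b) o' a' b' \<Longrightarrow> proj c f = f"
proof (rule ext, clarify)
  fix s l assume f: "f \<in> KhC (smooth D c b) o' a' b'"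
  show "proj c f (s, l) = f (s, l)"
  proof (cases "f (s, l) = 0")
    case False
    then have "valid_gen (smooth D c b) (s, l)" using f unfolding KhC_iff by blast
    then have "\<not> s c" by (rule valid_notc)
    then show ?thesis by (simp add: proj_apply)
  qed (simp add: proj_apply)
qed

end

theorem mainTheorem1:
  fixes D :: diag and c :: nat and ori ori0 :: orientation and i j :: int
  assumes "link_diagram D" and "is_orientation D ori"
    and "c \<in> crossings D" and "positive D ori c"
    and "is_orientation (smooth (switch D c) c False) ori0"
  shows
    "let Dp = D; Dm = switch D c; D0p = smooth D c False;
         D1p = smooth D c True; D0m = smooth (switch D c) c False;
         cp = int (nminus D1p ori0) - int (nminus Dp ori);
         cm = int (nminus D0m ori0) - int (nminus Dm ori)
     in cp = cm + 1
      \<and> D1p = D0m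
      \<and> KhC D1p ori0 (i - cp - 1) (j - 3 * cp - 2) = KhC D0m ori0 ((i - 2) - cm) ((j - 4) - 3 * cm - 1)
      \<and> proj c ` KhC Dm ori (i - 2) (j - 4) \<subseteq> KhC D0m ori0 ((i - 2) - cm) ((j - 4) - 3 * cm - 1)
      \<and> incl c ` KhC D1p ori0 (i - cp - 1) (j - 3 * cp - 2) \<subseteq> KhC Dp ori i j
      \<and> exact4 (KhC D0p ori (i - 2) (j - 3)) (KhC Dm ori (i - 2) (j - 4))
               (KhC Dp ori i j) (KhC D0p ori i (j - 1))
               (incl c) (incl c \<circ> proj c) (proj c)"
proof -
  note cr = assms(3) and ori = assms(2) and posc = assms(4)
  have "is_cross (kind D c)" using cr by (simp add: crossings_def)
  then obtain u where u: "kind D c = Cross u" by (cases "kind D c") (auto simp: is_cross_def)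
  have sw: "smooth (switch D c) c False = smooth D c True" by (rule smooth_switch[OF u])
  have nmm: "int (nminus (switch D c) ori) = int (nminus D ori) + 1" by (rule nm_m[OF cr u ori posc])
  define m where "m = int (nminus D ori)"
  define m0 where "m0 = int (nminus (smooth D c True) ori0)"
  note P1 = P1[OF cr u ori posc, where oz = ori0, folded m_def m0_def]
  note I1 = I1[OF cr u ori posc, where oz = ori0, folded m_def m0_def]
  note I0 = I0[OF cr u ori posc]
  note P0 = P0[OF cr u ori posc]
  note bk_Dm = bk_Dm[OF cr u ori posc]
  note bk_D = bk_D[OF cr u ori posc, where oz = ori0, folded m_def m0_def]
  note D1_Dm = D1_Dm[OF cr u ori posc, where oz = ori0, folded m_def m0_def]
  note D0_D = D0_D[OF cr u ori posc]
  let ?A = "KhC (smooth D c False) ori (i - 2) (j - 3)"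
  let ?B = "KhC (switch D c) ori (i - 2) (j - 4)"
  let ?C = "KhC D ori i j"
  let ?E = "KhC (smooth D c False) ori i (j - 1)"
  let ?M = "KhC (smooth D c True) ori0 (i - 1 - m0 + m) (j - 2 - 3 * m0 + 3 * m)"
  have BM: "proj c ` ?B \<subseteq> ?M"
    by (rule image_subsetI, erule P1) simp_all
  have MC: "incl c ` ?M \<subseteq> ?C"
    by (rule image_subsetI, erule I1) simp_all
  have e1: "incl c ` ?A \<subseteq> ?B"
    by (rule image_subsetI, erule I0) simp
  have e2: "(incl c \<circ> proj c) ` ?B \<subseteq> ?C"
    using BM MC by (auto simp: image_comp[symmetric])
  have e3: "proj c ` ?C \<subseteq> ?E"
    by (rule image_subsetI, erule P0) simp
  have e4: "{a \<in> ?A. incl c a = (\<lambda>_. 0)} = {\<lambda>_. 0}"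
  proof
    show "{a \<in> ?A. incl c a = (\<lambda>_. 0)} \<subseteq> {\<lambda>_. 0}"
    proof clarify
      fix a assume a: "a \<in> ?A" "incl c a = (\<lambda>_. 0)"
      have "\<forall>s l. a (s, l) \<noteq> 0 \<longrightarrow> \<not> s c"
        using a(1) unfolding KhC_iff by (auto dest: valid_notc[OF cr u ori posc])
      then show "a = (\<lambda>_. 0)" using incl_inj a(2) by blast
    qed
    show "{\<lambda>_. 0} \<subseteq> {a \<in> ?A. incl c a = (\<lambda>_. 0)}"
      by (auto simp: KhC_iff incl_zero)
  qed
  have e5: "{b \<in> ?B. (incl c \<circ> proj c) b = (\<lambda>_. 0)} = incl c ` ?A"
  proof
    show "{b \<in> ?B. (incl c \<circ> proj c) b = (\<lambda>_. 0)} \<subseteq> incl c ` ?A"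
    proof clarify
      fix b assume b: "b \<in> ?B" "(incl c \<circ> proj c) b = (\<lambda>_. 0)"
      have "\<forall>s l. proj c b (s, l) \<noteq> 0 \<longrightarrow> \<not> s c" by (simp add: proj_apply)
      then have "proj c b = (\<lambda>_. 0)" using incl_inj b(2) by auto
      then have sup: "\<forall>s l. b (s, l) \<noteq> 0 \<longrightarrow> s c"
        by (auto simp: zero_iff proj_apply) (metis)
      have "bk c b \<in> ?A" by (rule bk_Dm[OF b(1) sup]) simp
      moreover have "b = incl c (bk c b)" using incl_bk[OF sup] by simp
      ultimately show "b \<in> incl c ` ?A" by blast
    qed
    show "incl c ` ?A \<subseteq> {b \<in> ?B. (incl c \<circ> proj c) b = (\<lambda>_. 0)}"
      using e1 by (auto simp: proj_incl incl_zero)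
  qed
  have e6: "{x \<in> ?C. proj c x = (\<lambda>_. 0)} = (incl c \<circ> proj c) ` ?B"
  proof
    show "{x \<in> ?C. proj c x = (\<lambda>_. 0)} \<subseteq> (incl c \<circ> proj c) ` ?B"
    proof clarify
      fix x assume x: "x \<in> ?C" "proj c x = (\<lambda>_. 0)"
      then have sup: "\<forall>s l. x (s, l) \<noteq> 0 \<longrightarrow> s c"
        by (auto simp: zero_iff proj_apply) (metis)
      have y: "bk c x \<in> ?M" by (rule bk_D[OF x(1) sup]) simp_all
      have yB: "bk c x \<in> ?B" by (rule D1_Dm[OF y]) simp_all
      have "proj c (bk c x) = bk c x" by (rule proj_id[OF cr u ori posc y])
      then have "x = (incl c \<circ> proj c) (bk c x)" using incl_bk[OF sup] by simp
      then show "x \<in> (incl c \<circ> proj c) ` ?B" using yB by blast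
    qed
    show "(incl c \<circ> proj c) ` ?B \<subseteq> {x \<in> ?C. proj c x = (\<lambda>_. 0)}"
      using e2 by (auto simp: proj_incl)
  qed
  have e7: "proj c ` ?C = ?E"
  proof
    show "proj c ` ?C \<subseteq> ?E" by (rule e3)
    show "?E \<subseteq> proj c ` ?C"
    proof
      fix e assume e: "e \<in> ?E"
      have "e \<in> ?C" by (rule D0_D[OF e]) simp
      moreover have "proj c e = e" by (rule proj_id[OF cr u ori posc e])
      ultimately show "e \<in> proj c ` ?C" by (metis image_eqI)
    qed
  qed
  have ex: "exact4 ?A ?B ?C ?E (incl c) (incl c \<circ> proj c) (proj c)"
    unfolding exact4_def using e1 e2 e3 e4 e5 e6 e7 by blast
  have k1: "KhC (smooth D c True) ori0 (i - (m0 - m) - 1) (j - 3 * (m0 - m) - 2) = ?M"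
    by (rule arg_cong2[where f = "KhC (smooth D c True) ori0"]) simp_all
  have k2: "KhC (smooth D c True) ori0 (i - 2 - (m0 - (m + 1))) (j - 4 - 3 * (m0 - (m + 1)) - 1) = ?M"
    by (rule arg_cong2[where f = "KhC (smooth D c True) ori0"]) simp_all
  show ?thesis
    unfolding Let_def sw nmm m_def[symmetric] m0_def[symmetric] k1 k2
    using BM MC ex by simp
qed

end
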